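(* Let $n\ge2$ and $\mathbb{P}\in\mathcal{C}_n$. Then \[ R_n(\mathbb{P})=\sup_{x,y\in\mathbb{R}_{++}}\phi^{\mathbb{P}}(x,y). \]
   Context: Scheduling on two machines with $n$ tasks. A processing-time matrix is $T\in\mathbb{R}_{++}^{2\times n}$; an allocation is $X\in\{0,1\}^{2\times n}$ with $X_{1j}+X_{2j}=1$; makespan $M(X,T)=\max_{i\in\{1,2\}}\sum_jX_{ij}T_{ij}$; $M^*(T)=\min_XM(X,T)$. $\mathcal{P}_n$ is the set of Borel probability measures on $\mathbb{R}^n$ supported in $\mathbb{R}_{++}^n$. For $\mathbb{P}\in\mathcal{P}_n$, algorithm $\mathcal{A}^{\mathbb{P}}$ draws $\mathbf{z}\sim\mathbb{P}$ and sends task $j$ to machine 1 iff $T_{1j}/T_{2j}<z_j$ (else to machine 2); $M(\mathbb{P},T)$ is its expected makespan and $R_n(\mathbb{P})=\sup_{T\in\mathbb{R}_{++}^{2\times n}}M(\mathbb{P},T)/M^*(T)\in[1,\infty]$. $\mathcal{C}_n$ is the set of $\mathbb{P}\in\mathcal{P}_n$ invariant under permutations of coordinates. For $\mathbb{P}\in\mathcal{C}_n$ let $F_{\mathbb{P}}(x)=\mathbf{P}_{\mathbf{z}\sim\mathbb{P}}[z_1\le x]$ and $H_{\mathbb{P}}(x,y)=\mathbf{P}_{\mathbf{z}\sim\mathbb{P}}[z_1\le x,z_2\le y]$, and \[ \phi^{\mathbb{P}}(x,y)=1+y-\min\{1,1-\tfrac1x+y\}F_{\mathbb{P}}(x)-yF_{\mathbb{P}}(y)+\min\{1+\tfrac1x,1+y\}H_{\mathbb{P}}(x,y).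 \] *)

theory Defs
  imports "HOL-Probability.Probability"
begin

text \<open>A processing-time matrix T is given by its two rows
  t1, t2 (machine 1 and machine 2); only the values on {..<n} matter.
  An allocation is the set S of tasks sent to machine 1 (the rest go to machine 2).\<close>

definition makespan :: "nat \<Rightarrow> (nat \<Rightarrow> real) \<Rightarrow> (nat \<Rightarrow> real) \<Rightarrow> nat set \<Rightarrow> real" where
  "makespan n t1 t2 S = max (\<Sum>j\<in>S. t1 j) (\<Sum>j\<in>{..<n} - S. t2 j)"

definition opt_makespan :: "nat \<Rightarrow> (nat \<Rightarrow> real) \<Rightarrow> (nat \<Rightarrow> real) \<Rightarrow> real" where
  "opt_makespan n t1 t2 = Min (makespan n t1 t2 ` Pow {..<n})"

definition pos_matrix :: "nat \<Rightarrow> (nat \<Rightarrow> real) \<Rightarrow> (nat \<Rightarrow> real) \<Rightarrow> bool" where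
  "pos_matrix n t1 t2 \<longleftrightarrow> (\<forall>j<n. 0 < t1 j \<and> 0 < t2 j)"

definition alloc :: "nat \<Rightarrow> (nat \<Rightarrow> real) \<Rightarrow> (nat \<Rightarrow> real) \<Rightarrow> (nat \<Rightarrow> real) \<Rightarrow> nat set" where
  "alloc n t1 t2 z = {j\<in>{..<n}. t1 j / t2 j < z j}"

text \<open>The set P_n: Borel probability measures on R^n (R^n = functions on {..<n}) concentrated on
  the open positive orthant.\<close>
definition Pn :: "nat \<Rightarrow> (nat \<Rightarrow> real) measure \<Rightarrow> bool" where
  "Pn n P \<longleftrightarrow> prob_space P \<and> sets P = sets (PiM {..<n} (\<lambda>_. borel))
      \<and> (AE z in P. \<forall>j<n. 0 < z j)"

definition Cn :: "nat \<Rightarrow> (nat \<Rightarrow> real) measure \<Rightarrow> bool" where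
  "Cn n P \<longleftrightarrow> Pn n P \<and>
     (\<forall>\<sigma>. \<sigma> permutes {..<n} \<longrightarrow> distr P (PiM {..<n} (\<lambda>_. borel)) (\<lambda>z. z \<circ> \<sigma>) = P)"

definition exp_makespan :: "nat \<Rightarrow> (nat \<Rightarrow> real) measure \<Rightarrow> (nat \<Rightarrow> real) \<Rightarrow> (nat \<Rightarrow> real) \<Rightarrow> real" where
  "exp_makespan n P t1 t2 = (\<integral>z. makespan n t1 t2 (alloc n t1 t2 z) \<partial>P)"

definition approx_ratio :: "nat \<Rightarrow> (nat \<Rightarrow> real) measure \<Rightarrow> ereal" where
  "approx_ratio n P = (SUP t\<in>{(t1, t2). pos_matrix n t1 t2}.
      ereal (exp_makespan n P (fst t) (snd t) / opt_makespan n (fst t) (snd t)))"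

definition cdfF :: "(nat \<Rightarrow> real) measure \<Rightarrow> real \<Rightarrow> real" where
  "cdfF P x = measure P {z\<in>space P. z 0 \<le> x}"

definition cdfH :: "(nat \<Rightarrow> real) measure \<Rightarrow> real \<Rightarrow> real \<Rightarrow> real" where
  "cdfH P x y = measure P {z\<in>space P. z 0 \<le> x \<and> z 1 \<le> y}"

definition phi :: "(nat \<Rightarrow> real) measure \<Rightarrow> real \<Rightarrow> real \<Rightarrow> real" where
  "phi P x y = 1 + y - min 1 (1 - 1 / x + y) * cdfF P x - y * cdfF P y
       + min (1 + 1 / x) (1 + y) * cdfH P x y"

end

theory Submission imports Defs begin

abbreviation MM :: "nat \<Rightarrow> (nat \<Rightarrow> real) measure" where
  "MM n \<equiv> PiM {..<n} (\<lambda>_. borel)"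

lemma Cn_prob: "Cn n P \<Longrightarrow> prob_space P"
  by (simp add: Cn_def Pn_def)

lemma Cn_sets: "Cn n P \<Longrightarrow> sets P = sets (MM n)"
  by (simp add: Cn_def Pn_def)

lemma Cn_space: "Cn n P \<Longrightarrow> space P = space (MM n)"
  using Cn_sets sets_eq_imp_space_eq by blast

lemma Cn_comp_meas:
  assumes "Cn n P" "k < n"
  shows "(\<lambda>z. z k) \<in> borel_measurable P"
proof -
  have "(\<lambda>z. z k) \<in> borel_measurable (MM n)"
    using assms(2) by (intro measurable_component_singleton) auto
  then show ?thesis using measurable_cong_sets[OF Cn_sets[OF assms(1)] refl] by blast
qed

lemma m1: assumes "\<sigma> permutes {..<n}" "i \<in> {..<n}"
  shows "(\<lambda>z. z (\<sigma> i)) \<in> MM n \<rightarrow>\<^sub>M borel"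
proof -
  have "\<sigma> i \<in> {..<n}" using permutes_in_image[OF assms(1)] assms(2) by simp
  then show ?thesis by (rule measurable_component_singleton)
qed

lemma m2: assumes "\<sigma> permutes {..<n}"
  shows "(\<lambda>z i. z (\<sigma> i)) \<in> space (MM n) \<rightarrow> (\<Pi>\<^sub>E i\<in>{..<n}. space borel)"
proof (rule Pi_I)
  fix z assume "z \<in> space (MM n)"
  then have ez: "z \<in> extensional {..<n}" by (simp add: space_PiM PiE_def)
  have "(\<lambda>i. z (\<sigma> i)) \<in> extensional {..<n}"
    unfolding extensional_def
  proof (intro CollectI allI impI)
    fix i assume i: "i \<notin> {..<n}"
    then have "\<sigma> i = i" by (rule permutes_not_in[OF assms])
    then show "z (\<sigma> i) = undefined" using extensional_arb[OF ez i] by simp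
  qed
  then show "(\<lambda>i. z (\<sigma> i)) \<in> (\<Pi>\<^sub>E i\<in>{..<n}. space borel)"
    by (simp add: PiE_iff)
qed

lemma perm_meas:
  assumes "\<sigma> permutes {..<n}"
  shows "(\<lambda>z. z \<circ> \<sigma>) \<in> MM n \<rightarrow>\<^sub>M MM n"
proof -
  have "(\<lambda>z i. z (\<sigma> i)) \<in> MM n \<rightarrow>\<^sub>M MM n"
    apply (rule measurable_PiM_single'[of "{..<n}" "\<lambda>i z. z (\<sigma> i)" "MM n" "\<lambda>_. borel"])
    apply (rule m1[OF assms], assumption)
    apply (rule m2[OF assms])
    done
  then show ?thesis unfolding comp_def .
qed

lemma exch:
  assumes "Cn n P" "\<sigma> permutes {..<n}" "{z\<in>space (MM n). Q z} \<in> sets (MM n)"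
  shows "measure P {z\<in>space P. Q (z \<circ> \<sigma>)} = measure P {z\<in>space P. Q z}"
proof -
  have d: "distr P (MM n) (\<lambda>z. z \<circ> \<sigma>) = P" using assms(1,2) by (simp add: Cn_def)
  have m: "(\<lambda>z. z \<circ> \<sigma>) \<in> P \<rightarrow>\<^sub>M MM n"
    using perm_meas[OF assms(2)] measurable_cong_sets[OF Cn_sets[OF assms(1)] refl] by blast
  have "measure P {z\<in>space P. Q z} = measure (distr P (MM n) (\<lambda>z. z \<circ> \<sigma>)) {z\<in>space (MM n). Q z}"
    using d Cn_space[OF assms(1)] by simp
  also have "\<dots> = measure P ((\<lambda>z. z \<circ> \<sigma>) -` {z\<in>space (MM n). Q z} \<inter> space P)"
    by (rule measure_distr[OF m assms(3)])
  also have "(\<lambda>z. z \<circ> \<sigma>) -` {z\<in>space (MM n). Q z} \<inter> space P = {z\<in>space P. Q (z \<circ> \<sigma>)}"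
    using measurable_space[OF m] by auto
  finally show ?thesis by simp
qed

lemma perm2:
  assumes "i < n" "j < n" "i \<noteq> j" "(1::nat) < n"
  shows "\<exists>\<sigma>. \<sigma> permutes {..<n} \<and> \<sigma> 0 = i \<and> \<sigma> 1 = j"
proof -
  define \<tau> where "\<tau> = Transposition.transpose 0 i"
  define j' where "j' = \<tau> j"
  have j'0: "j' \<noteq> 0" using assms(3) unfolding j'_def \<tau>_def
    by (auto simp: Transposition.transpose_def)
  have j'n: "j' < n" using assms unfolding j'_def \<tau>_def by (auto simp: Transposition.transpose_def)
  define \<sigma> where "\<sigma> = \<tau> \<circ> Transposition.transpose 1 j'"
  have "\<sigma> permutes {..<n}" unfolding \<sigma>_def \<tau>_def
    using assms j'n by (intro permutes_compose permutes_swap_id) auto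
  moreover have "\<sigma> 0 = i" using j'0 unfolding \<sigma>_def \<tau>_def by (auto simp: Transposition.transpose_def)
  moreover have "\<sigma> 1 = j" unfolding \<sigma>_def j'_def \<tau>_def by (auto simp: Transposition.transpose_def)
  ultimately show ?thesis by blast
qed

lemma cdfH_ij:
  assumes "Cn n P" "i < n" "j < n" "i \<noteq> j" "(1::nat) < n"
  shows "measure P {z\<in>space P. z i \<le> x \<and> z j \<le> y} = cdfH P x y"
proof -
  obtain \<sigma> where s: "\<sigma> permutes {..<n}" "\<sigma> 0 = i" "\<sigma> 1 = j" using perm2[OF assms(2-5)] by blast
  have [measurable]: "(\<lambda>z. z 0) \<in> borel_measurable (MM n)" "(\<lambda>z. z 1) \<in> borel_measurable (MM n)"
    using assms(5) by (auto intro!: measurable_component_singleton)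
  have "{z\<in>space (MM n). z 0 \<le> x \<and> z 1 \<le> y} \<in> sets (MM n)"
    by measurable
  from exch[OF assms(1) s(1) this] s(2,3) show ?thesis by (simp add: cdfH_def)
qed

lemma cdfF_i:
  assumes "Cn n P" "i < n"
  shows "measure P {z\<in>space P. z i \<le> x} = cdfF P x"
proof -
  have s: "Transposition.transpose 0 i permutes {..<n}" using assms(2) by (intro permutes_swap_id) auto
  have [measurable]: "(\<lambda>z. z 0) \<in> borel_measurable (MM n)"
    using assms(2) by (auto intro!: measurable_component_singleton)
  have "{z\<in>space (MM n). z 0 \<le> x} \<in> sets (MM n)"
    by measurable
  from exch[OF assms(1) s this] show ?thesis by (simp add: cdfF_def)
qed


definition ind :: "real \<Rightarrow> real \<Rightarrow> real" where
  "ind r u = (if r < u then 1 else 0)"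

definition pairval :: "real \<Rightarrow> real \<Rightarrow> real \<Rightarrow> real \<Rightarrow> real" where
  "pairval x y u v = max (ind x u + y * ind y v) ((1/x) * (1 - ind x u) + (1 - ind y v))"

lemma pairval_dec:
  assumes "0 < x" "0 < y"
  shows "pairval x y u v = (1 + y) - min 1 (1 - 1/x + y) * (if u \<le> x then 1 else 0)
     - y * (if v \<le> y then 1 else 0) + min (1 + 1/x) (1 + y) * (if u \<le> x \<and> v \<le> y then 1 else 0)"
  using assms by (cases "u \<le> x"; cases "v \<le> y") (auto simp: pairval_def ind_def min_def max_def)

lemma pairval_nonneg: "0 < x \<Longrightarrow> 0 < y \<Longrightarrow> 0 \<le> pairval x y u v"
  by (auto simp: pairval_def ind_def max_def)

lemma ind_meas:
  assumes "Cn n P" "k < n"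
  shows "(\<lambda>z. ind r (z k)) \<in> borel_measurable P"
proof -
  note [measurable] = Cn_comp_meas[OF assms]
  have "{z\<in>space P. r < z k} \<in> sets P" by measurable
  then show ?thesis unfolding ind_def
    by (rule measurable_If[where P="\<lambda>z. r < z k" and f="\<lambda>_. 1" and g="\<lambda>_. 0", rotated 2]) auto
qed

lemma ind_int:
  assumes "Cn n P" "k < n"
  shows "integrable P (\<lambda>z. ind r (z k))"
proof -
  interpret prob_space P using Cn_prob[OF assms(1)] .
  show ?thesis
    by (rule integrable_const_bound[where B=1], simp add: ind_def, rule ind_meas[OF assms])
qed

lemma pair_int:
  assumes "Cn n P" "i < n" "j < n" "i \<noteq> j" "0 < x" "0 < y"
  shows "integrable P (\<lambda>z. pairval x y (z i) (z j))"
    and "integral\<^sup>L P (\<lambda>z. pairval x y (z i) (z j)) = phi P x y"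
proof -
  interpret prob_space P using Cn_prob[OF assms(1)] .
  have n1: "(1::nat) < n" using assms(2-4) by linarith
  note [measurable] = Cn_comp_meas[OF assms(1,2)] Cn_comp_meas[OF assms(1,3)]
  define A where "A = {z\<in>space P. z i \<le> x}"
  define B where "B = {z\<in>space P. z j \<le> y}"
  define C where "C = {z\<in>space P. z i \<le> x \<and> z j \<le> y}"
  have sA: "A \<in> sets P" unfolding A_def by measurable
  have sB: "B \<in> sets P" unfolding B_def by measurable
  have sC: "C \<in> sets P" unfolding C_def by measurable
  have iA: "integrable P (indicator A :: _ \<Rightarrow> real)" using sA by (simp add: integrable_indicator_iff emeasure_finite less_top[symmetric])
  have iB: "integrable P (indicator B :: _ \<Rightarrow> real)" using sB by (simp add: integrable_indicator_iff emeasure_finite less_top[symmetric])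
  have iC: "integrable P (indicator C :: _ \<Rightarrow> real)" using sC by (simp add: integrable_indicator_iff emeasure_finite less_top[symmetric])
  define c1 where "c1 = min 1 (1 - 1/x + y)"
  define c3 where "c3 = min (1 + 1/x) (1 + y)"
  define g where "g = (\<lambda>z. (1 + y) - c1 * indicator A z - y * indicator B z + c3 * (indicator C z :: real))"
  have eq: "pairval x y (z i) (z j) = g z" if "z \<in> space P" for z
    using that unfolding g_def pairval_dec[OF assms(5,6)] A_def B_def C_def c1_def c3_def
    by (simp add: indicator_def)
  have ig: "integrable P g" unfolding g_def using iA iB iC by simp
  show "integrable P (\<lambda>z. pairval x y (z i) (z j))"
  proof -
    have "integrable P (\<lambda>z. pairval x y (z i) (z j)) \<longleftrightarrow> integrable P g"
      by (rule Bochner_Integration.integrable_cong) (simp_all add: eq)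
    then show ?thesis using ig by simp
  qed
  have "integral\<^sup>L P (\<lambda>z. pairval x y (z i) (z j)) = integral\<^sup>L P g"
    by (rule Bochner_Integration.integral_cong) (simp_all add: eq)
  also have "\<dots> = (1 + y) - c1 * measure P A - y * measure P B + c3 * measure P C"
    unfolding g_def using iA iB iC sA sB sC
    by (simp add: integral_indicator prob_space Int_absorb2 sets.sets_into_space)
  also have "measure P A = cdfF P x" unfolding A_def by (rule cdfF_i[OF assms(1,2)])
  also have "measure P B = cdfF P y" unfolding B_def by (rule cdfF_i[OF assms(1,3)])
  also have "measure P C = cdfH P x y" unfolding C_def by (rule cdfH_ij[OF assms(1-4) n1])
  finally show "integral\<^sup>L P (\<lambda>z. pairval x y (z i) (z j)) = phi P x y"
    by (simp add: phi_def c1_def c3_def)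
qed


lemma ms_alloc:
  "makespan n t1 t2 (alloc n t1 t2 z) =
     max (\<Sum>k<n. t1 k * ind (t1 k / t2 k) (z k)) (\<Sum>k<n. t2 k * (1 - ind (t1 k / t2 k) (z k)))"
proof -
  have 1: "(\<Sum>j\<in>alloc n t1 t2 z. t1 j) = (\<Sum>k<n. t1 k * ind (t1 k / t2 k) (z k))"
  proof -
    have "(\<Sum>k<n. t1 k * ind (t1 k / t2 k) (z k)) = (\<Sum>k<n. if t1 k / t2 k < z k then t1 k else 0)"
      by (rule sum.cong) (auto simp: ind_def)
    also have "\<dots> = (\<Sum>j\<in>alloc n t1 t2 z. t1 j)"
      unfolding alloc_def by (rule sum.inter_filter[symmetric]) simp
    finally show ?thesis by simp
  qed
  have 2: "(\<Sum>j\<in>{..<n} - alloc n t1 t2 z. t2 j) = (\<Sum>k<n. t2 k * (1 - ind (t1 k / t2 k) (z k)))"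
  proof -
    have "(\<Sum>k<n. t2 k * (1 - ind (t1 k / t2 k) (z k))) = (\<Sum>k<n. if \<not> t1 k / t2 k < z k then t2 k else 0)"
      by (rule sum.cong) (auto simp: ind_def)
    also have "\<dots> = (\<Sum>j\<in>{k\<in>{..<n}. \<not> t1 k / t2 k < z k}. t2 j)"
      by (rule sum.inter_filter[symmetric]) simp
    also have "{k\<in>{..<n}. \<not> t1 k / t2 k < z k} = {..<n} - alloc n t1 t2 z"
      by (auto simp: alloc_def)
    finally show ?thesis by simp
  qed
  show ?thesis unfolding makespan_def 1 2 ..
qed

lemma ms_int:
  assumes "Cn n P"
  shows "integrable P (\<lambda>z. makespan n t1 t2 (alloc n t1 t2 z))"
proof -
  interpret prob_space P using Cn_prob[OF assms(1)] .
  show ?thesis unfolding ms_alloc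
    by (auto intro!: integrable_max integrable_sum integrable_mult_right integrable_diff ind_int[OF assms(1)])
qed

lemma conv_bound:
  fixes f :: "'a \<Rightarrow> real" and w :: "'b \<Rightarrow> real"
  assumes "prob_space P" "finite K" "\<And>k. k\<in>K \<Longrightarrow> 0 \<le> w k" "sum w K = 1" "0 \<le> m"
    "\<And>k. k\<in>K \<Longrightarrow> integrable P (g k)" "\<And>k. k\<in>K \<Longrightarrow> integral\<^sup>L P (g k) \<le> c"
    "integrable P f" "\<And>z. z\<in>space P \<Longrightarrow> f z \<le> (\<Sum>k\<in>K. w k * (m * g k z))"
  shows "integral\<^sup>L P f \<le> m * c"
proof -
  have "integral\<^sup>L P f \<le> integral\<^sup>L P (\<lambda>z. \<Sum>k\<in>K. w k * (m * g k z))"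
    by (rule Bochner_Integration.integral_mono) (auto intro!: integrable_sum integrable_mult_right assms)
  also have "\<dots> = (\<Sum>k\<in>K. integral\<^sup>L P (\<lambda>z. w k * (m * g k z)))"
    by (rule Bochner_Integration.integral_sum) (auto intro!: integrable_mult_right assms)
  also have "\<dots> = (\<Sum>k\<in>K. w k * (m * integral\<^sup>L P (g k)))"
    by (simp add: integral_mult_right_zero)
  also have "\<dots> \<le> (\<Sum>k\<in>K. w k * (m * c))"
    by (intro sum_mono mult_left_mono) (auto simp: assms)
  also have "\<dots> = m * c" using assms(4) by (simp add: sum_distrib_right[symmetric])
  finally show ?thesis .
qed

lemma pv_bound:
  assumes "0 \<le> \<alpha>" "\<alpha> \<le> m" "0 \<le> \<beta>" "\<beta> \<le> m" "0 < x" "0 < y"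
  shows "\<alpha> * ind x u + \<beta> * y * ind y v \<le> m * pairval x y u v"
    and "\<alpha> * (1/x) * (1 - ind x u) + \<beta> * (1 - ind y v) \<le> m * pairval x y u v"
proof -
  have m0: "0 \<le> m" using assms by linarith
  have I: "0 \<le> ind x u" "ind x u \<le> 1" "0 \<le> ind y v" "ind y v \<le> 1" by (auto simp: ind_def)
  have a1: "\<alpha> * ind x u \<le> m * ind x u" using assms(2) I by (intro mult_right_mono)
  have a2: "\<beta> * y * ind y v \<le> m * y * ind y v" using assms I by (intro mult_right_mono) auto
  have a3: "m * (ind x u + y * ind y v) \<le> m * pairval x y u v"
    using m0 by (intro mult_left_mono) (auto simp: pairval_def)
  show "\<alpha> * ind x u + \<beta> * y * ind y v \<le> m * pairval x y u v"
    using a1 a2 a3 by (simp add: algebra_simps)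
  have q: "0 \<le> (1/x) * (1 - ind x u)" using assms I by simp
  have b1: "\<alpha> * ((1/x) * (1 - ind x u)) \<le> m * ((1/x) * (1 - ind x u))"
    using assms(2) q by (rule mult_right_mono)
  have b2: "\<beta> * (1 - ind y v) \<le> m * (1 - ind y v)" using assms I by (intro mult_right_mono) auto
  have b3: "m * ((1/x) * (1 - ind x u) + (1 - ind y v)) \<le> m * pairval x y u v"
    using m0 by (intro mult_left_mono) (auto simp: pairval_def)
  show "\<alpha> * (1/x) * (1 - ind x u) + \<beta> * (1 - ind y v) \<le> m * pairval x y u v"
    using b1 b2 b3 by (simp add: algebra_simps)
qed

lemma opt_ex:
  assumes "1 \<le> n"
  shows "\<exists>S\<subseteq>{..<n}. opt_makespan n t1 t2 = makespan n t1 t2 S"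
proof -
  have "Min (makespan n t1 t2 ` Pow {..<n}) \<in> makespan n t1 t2 ` Pow {..<n}"
    by (rule Min_in) auto
  then show ?thesis unfolding opt_makespan_def by auto
qed

lemma opt_le:
  assumes "S \<subseteq> {..<n}"
  shows "opt_makespan n t1 t2 \<le> makespan n t1 t2 S"
  unfolding opt_makespan_def using assms by (intro Min_le) auto

lemma opt_pos:
  assumes "1 \<le> n" "pos_matrix n t1 t2"
  shows "0 < opt_makespan n t1 t2"
proof -
  obtain S where S: "S \<subseteq> {..<n}" "opt_makespan n t1 t2 = makespan n t1 t2 S"
    using opt_ex[OF assms(1)] by blast
  show ?thesis
  proof (cases "S = {}")
    case True
    have "0 < (\<Sum>j\<in>{..<n} - S. t2 j)"
      using assms True by (intro sum_pos) (auto simp: pos_matrix_def lessThan_empty_iff)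
    then show ?thesis using S(2) by (simp add: makespan_def)
  next
    case False
    have "finite S" using S(1) finite_subset by blast
    then have "0 < (\<Sum>j\<in>S. t1 j)"
      using assms False S(1) by (intro sum_pos) (auto simp: pos_matrix_def)
    then show ?thesis using S(2) by (simp add: makespan_def)
  qed
qed

lemma sum_prod2: "(\<Sum>k\<in>A \<times> B. F (fst k) (snd k)) = (\<Sum>i\<in>A. \<Sum>j\<in>B. F i j)"
  by (simp add: sum.cartesian_product split_beta)


lemma dsum1:
  fixes a b X :: "nat \<Rightarrow> real"
  assumes "(\<Sum>j\<in>B. b j) = \<beta>" "\<alpha> \<noteq> 0" "\<beta> \<noteq> 0"
  shows "(\<Sum>i\<in>A. \<Sum>j\<in>B. a i * b j / (\<alpha> * \<beta>) * (\<alpha> * X i)) = (\<Sum>i\<in>A. a i * X i)"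
proof (rule sum.cong[OF refl])
  fix i
  have "(\<Sum>j\<in>B. a i * b j / (\<alpha> * \<beta>) * (\<alpha> * X i)) = (\<Sum>j\<in>B. (a i * X i / \<beta>) * b j)"
    by (rule sum.cong[OF refl]) (simp add: field_simps assms)
  also have "\<dots> = (a i * X i / \<beta>) * (\<Sum>j\<in>B. b j)" by (simp add: sum_distrib_left)
  also have "\<dots> = a i * X i" using assms by simp
  finally show "(\<Sum>j\<in>B. a i * b j / (\<alpha> * \<beta>) * (\<alpha> * X i)) = a i * X i" .
qed

lemma dsum2:
  fixes a b Y :: "nat \<Rightarrow> real"
  assumes "(\<Sum>i\<in>A. a i) = \<alpha>" "\<alpha> \<noteq> 0" "\<beta> \<noteq> 0"
  shows "(\<Sum>i\<in>A. \<Sum>j\<in>B. a i * b j / (\<alpha> * \<beta>) * (\<beta> * Y j)) = (\<Sum>j\<in>B. b j * Y j)"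
proof -
  have "(\<Sum>i\<in>A. \<Sum>j\<in>B. a i * b j / (\<alpha> * \<beta>) * (\<beta> * Y j)) = (\<Sum>j\<in>B. \<Sum>i\<in>A. a i * b j / (\<alpha> * \<beta>) * (\<beta> * Y j))"
    by (rule sum.swap)
  also have "\<dots> = (\<Sum>j\<in>B. b j * Y j)"
  proof (rule sum.cong[OF refl])
    fix j
    have "(\<Sum>i\<in>A. a i * b j / (\<alpha> * \<beta>) * (\<beta> * Y j)) = (\<Sum>i\<in>A. (b j * Y j / \<alpha>) * a i)"
      by (rule sum.cong[OF refl]) (simp add: field_simps assms)
    also have "\<dots> = (b j * Y j / \<alpha>) * (\<Sum>i\<in>A. a i)" by (simp add: sum_distrib_left)
    also have "\<dots> = b j * Y j" using assms by simp
    finally show "(\<Sum>i\<in>A. a i * b j / (\<alpha> * \<beta>) * (\<beta> * Y j)) = b j * Y j" .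
  qed
  finally show ?thesis .
qed

lemma upper:
  assumes Cn: "Cn n P" and n2: "2 \<le> n" and pos: "pos_matrix n t1 t2"
    and phic: "\<And>x y. 0 < x \<Longrightarrow> 0 < y \<Longrightarrow> phi P x y \<le> c"
  shows "exp_makespan n P t1 t2 \<le> c * opt_makespan n t1 t2"
proof -
  have PS: "prob_space P" using Cn_prob[OF Cn] .
  define r where "r = (\<lambda>k. t1 k / t2 k)"
  define I where "I = (\<lambda>k (z::nat\<Rightarrow>real). ind (r k) (z k))"
  have t1p: "\<And>k. k < n \<Longrightarrow> 0 < t1 k" and t2p: "\<And>k. k < n \<Longrightarrow> 0 < t2 k"
    using pos by (auto simp: pos_matrix_def)
  have rp: "\<And>k. k < n \<Longrightarrow> 0 < r k" unfolding r_def using t1p t2p by simp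
  have ar: "\<And>k. k < n \<Longrightarrow> t2 k * r k = t1 k"
  proof -
    fix k assume "k < n"
    then have "t2 k \<noteq> 0" using t2p by fastforce
    then show "t2 k * r k = t1 k" unfolding r_def by simp
  qed
  have br: "\<And>k. k < n \<Longrightarrow> t1 k * (1 / r k) = t2 k"
  proof -
    fix k assume "k < n"
    then have "t2 k \<noteq> 0" "t1 k \<noteq> 0" using t2p t1p by fastforce+
    then show "t1 k * (1 / r k) = t2 k" unfolding r_def by simp
  qed
  define f where "f = (\<lambda>z. makespan n t1 t2 (alloc n t1 t2 z))"
  have feq: "\<And>z. f z = max (\<Sum>k<n. t1 k * I k z) (\<Sum>k<n. t2 k * (1 - I k z))"
    unfolding f_def I_def r_def by (rule ms_alloc)
  have fint: "integrable P f" unfolding f_def by (rule ms_int[OF Cn])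
  obtain S where S: "S \<subseteq> {..<n}" "opt_makespan n t1 t2 = makespan n t1 t2 S"
    using opt_ex[of n t1 t2] n2 by auto
  define S2 where "S2 = {..<n} - S"
  define \<alpha> where "\<alpha> = (\<Sum>i\<in>S. t1 i)"
  define \<beta> where "\<beta> = (\<Sum>j\<in>S2. t2 j)"
  define m where "m = opt_makespan n t1 t2"
  have m_eq: "m = max \<alpha> \<beta>" unfolding m_def S(2) makespan_def \<alpha>_def \<beta>_def S2_def ..
  have finS: "finite S" using S(1) finite_subset by blast
  have finS2: "finite S2" unfolding S2_def by simp
  have S2n: "\<And>j. j \<in> S2 \<Longrightarrow> j < n" unfolding S2_def by simp
  have Sn: "\<And>i. i \<in> S \<Longrightarrow> i < n" using S(1) by auto
  have \<alpha>0: "0 \<le> \<alpha>" unfolding \<alpha>_def using Sn t1p by (intro sum_nonneg) (simp add: less_imp_le)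
  have \<beta>0: "0 \<le> \<beta>" unfolding \<beta>_def using S2n t2p by (intro sum_nonneg) (simp add: less_imp_le)
  have m0: "0 \<le> m" using m_eq \<alpha>0 by simp
  have split: "\<And>h :: nat \<Rightarrow> real. (\<Sum>k<n. h k) = (\<Sum>i\<in>S. h i) + (\<Sum>j\<in>S2. h j)"
  proof -
    fix h :: "nat \<Rightarrow> real"
    have "(\<Sum>k<n. h k) = (\<Sum>k\<in>{..<n} - S. h k) + (\<Sum>k\<in>S. h k)"
      by (rule sum.subset_diff[OF S(1)]) simp
    then show "(\<Sum>k<n. h k) = (\<Sum>i\<in>S. h i) + (\<Sum>j\<in>S2. h j)" unfolding S2_def by linarith
  qed
  define jj where "jj = (\<lambda>i::nat. if i = 0 then (1::nat) else 0)"
  have jj: "\<And>i. jj i < n" "\<And>i. jj i \<noteq> i" unfolding jj_def using n2 by auto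
  have I01: "\<And>k z. 0 \<le> I k z \<and> I k z \<le> 1" unfolding I_def ind_def by auto
  have "integral\<^sup>L P f \<le> m * c"
  proof (cases "S = {}")
    case True
    then have S2e: "S2 = {..<n}" unfolding S2_def by simp
    have \<alpha>e: "\<alpha> = 0" unfolding \<alpha>_def True by simp
    have \<beta>p: "0 < \<beta>" unfolding \<beta>_def S2e using t2p n2 by (intro sum_pos) (auto simp: lessThan_empty_iff)
    have mb: "m = \<beta>" using m_eq \<alpha>e \<beta>p by simp
    define w where "w = (\<lambda>j. t2 j / \<beta>)"
    define g where "g = (\<lambda>j (z::nat\<Rightarrow>real). pairval 1 (r j) (z (jj j)) (z j))"
    show ?thesis
    proof (rule conv_bound[OF PS, of "{..<n}" w m g c f])
      show "finite {..<n}" by simp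
      show "\<And>k. k \<in> {..<n} \<Longrightarrow> 0 \<le> w k" unfolding w_def using t2p \<beta>p by (simp add: less_imp_le)
      show "sum w {..<n} = 1" unfolding w_def using \<beta>p \<beta>_def S2e by (simp add: sum_divide_distrib[symmetric])
      show "0 \<le> m" by (rule m0)
      show "\<And>k. k \<in> {..<n} \<Longrightarrow> integrable P (g k)"
        unfolding g_def using pair_int(1)[OF Cn] jj rp by simp
      show "\<And>k. k \<in> {..<n} \<Longrightarrow> integral\<^sup>L P (g k) \<le> c"
        unfolding g_def using pair_int(2)[OF Cn] jj rp phic by simp
      show "integrable P f" by (rule fint)
      fix z assume "z \<in> space P"
      have t1b: "t1 k * I k z \<le> w k * (m * g k z)" if k: "k < n" for k
      proof -
        have "t1 k * I k z = w k * (\<beta> * r k * I k z)"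
          unfolding w_def using \<beta>p ar[OF k, symmetric] by (simp add: field_simps)
        also have "\<dots> \<le> w k * (m * g k z)"
        proof (rule mult_left_mono)
          show "\<beta> * r k * I k z \<le> m * g k z"
            using pv_bound(1)[where \<alpha>=0 and m=m and \<beta>=\<beta> and x=1 and y="r k" and u="z (jj k)" and v="z k"]
              rp[OF k] mb \<beta>p unfolding g_def I_def by simp
          show "0 \<le> w k" unfolding w_def using t2p[OF k] \<beta>p by simp
        qed
        finally show ?thesis .
      qed
      have t2b: "t2 k * (1 - I k z) \<le> w k * (m * g k z)" if k: "k < n" for k
      proof -
        have "t2 k * (1 - I k z) = w k * (\<beta> * (1 - I k z))"
          unfolding w_def using \<beta>p by (simp add: field_simps)
        also have "\<dots> \<le> w k * (m * g k z)"
        proof (rule mult_left_mono)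
          show "\<beta> * (1 - I k z) \<le> m * g k z"
            using pv_bound(2)[where \<alpha>=0 and m=m and \<beta>=\<beta> and x=1 and y="r k" and u="z (jj k)" and v="z k"]
              rp[OF k] mb \<beta>p unfolding g_def I_def by simp
          show "0 \<le> w k" unfolding w_def using t2p[OF k] \<beta>p by simp
        qed
        finally show ?thesis .
      qed
      have "(\<Sum>k<n. t1 k * I k z) \<le> (\<Sum>k<n. w k * (m * g k z))" by (rule sum_mono) (simp add: t1b)
      moreover have "(\<Sum>k<n. t2 k * (1 - I k z)) \<le> (\<Sum>k<n. w k * (m * g k z))" by (rule sum_mono) (simp add: t2b)
      ultimately show "f z \<le> (\<Sum>k<n. w k * (m * g k z))" unfolding feq by simp
    qed
  next
    case Sne: False
    show ?thesis
    proof (cases "S2 = {}")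
      case True
      then have Se: "S = {..<n}" unfolding S2_def using S(1) by auto
      have \<beta>e: "\<beta> = 0" unfolding \<beta>_def True by simp
      have \<alpha>p: "0 < \<alpha>" unfolding \<alpha>_def Se using t1p n2 by (intro sum_pos) (auto simp: lessThan_empty_iff)
      have ma: "m = \<alpha>" using m_eq \<beta>e \<alpha>p by simp
      define w where "w = (\<lambda>j. t1 j / \<alpha>)"
      define g where "g = (\<lambda>j (z::nat\<Rightarrow>real). pairval (r j) 1 (z j) (z (jj j)))"
      show ?thesis
      proof (rule conv_bound[OF PS, of "{..<n}" w m g c f])
        show "finite {..<n}" by simp
        show "\<And>k. k \<in> {..<n} \<Longrightarrow> 0 \<le> w k" unfolding w_def using t1p \<alpha>p by (simp add: less_imp_le)
        show "sum w {..<n} = 1" unfolding w_def using \<alpha>p \<alpha>_def Se by (simp add: sum_divide_distrib[symmetric])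
        show "0 \<le> m" by (rule m0)
        show "\<And>k. k \<in> {..<n} \<Longrightarrow> integrable P (g k)"
          unfolding g_def using pair_int(1)[OF Cn] jj rp by (simp add: eq_commute)
        show "integral\<^sup>L P (g k) \<le> c" if "k \<in> {..<n}" for k
        proof -
          from that have k: "k < n" by simp
          have "integral\<^sup>L P (g k) = phi P (r k) 1" unfolding g_def
            by (rule pair_int(2)[OF Cn k jj(1)]) (use jj(2)[of k] rp[OF k] in auto)
          then show ?thesis using phic[OF rp[OF k]] by simp
        qed
        show "integrable P f" by (rule fint)
        fix z assume "z \<in> space P"
        have t1b: "t1 k * I k z \<le> w k * (m * g k z)" if k: "k < n" for k
        proof -
          have "t1 k * I k z = w k * (\<alpha> * I k z)"
            unfolding w_def using \<alpha>p by (simp add: field_simps)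
          also have "\<dots> \<le> w k * (m * g k z)"
          proof (rule mult_left_mono)
            show "\<alpha> * I k z \<le> m * g k z"
              using pv_bound(1)[where \<alpha>=\<alpha> and m=m and \<beta>=0 and x="r k" and y=1 and u="z k" and v="z (jj k)"]
                rp[OF k] ma \<alpha>p unfolding g_def I_def by simp
            show "0 \<le> w k" unfolding w_def using t1p[OF k] \<alpha>p by simp
          qed
          finally show ?thesis .
        qed
        have t2b: "t2 k * (1 - I k z) \<le> w k * (m * g k z)" if k: "k < n" for k
        proof -
          have "t2 k * (1 - I k z) = w k * (\<alpha> * (1 / r k) * (1 - I k z))"
            unfolding w_def using \<alpha>p br[OF k, symmetric] rp[OF k] by (simp add: field_simps)
          also have "\<dots> \<le> w k * (m * g k z)"
          proof (rule mult_left_mono)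
            show "\<alpha> * (1 / r k) * (1 - I k z) \<le> m * g k z"
              using pv_bound(2)[where \<alpha>=\<alpha> and m=m and \<beta>=0 and x="r k" and y=1 and u="z k" and v="z (jj k)"]
                rp[OF k] ma \<alpha>p unfolding g_def I_def by simp
            show "0 \<le> w k" unfolding w_def using t1p[OF k] \<alpha>p by simp
          qed
          finally show ?thesis .
        qed
        have "(\<Sum>k<n. t1 k * I k z) \<le> (\<Sum>k<n. w k * (m * g k z))" by (rule sum_mono) (simp add: t1b)
        moreover have "(\<Sum>k<n. t2 k * (1 - I k z)) \<le> (\<Sum>k<n. w k * (m * g k z))" by (rule sum_mono) (simp add: t2b)
        ultimately show "f z \<le> (\<Sum>k<n. w k * (m * g k z))" unfolding feq by simp
      qed
    next
      case S2ne: False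
      have \<alpha>p: "0 < \<alpha>" unfolding \<alpha>_def using t1p Sn Sne finS by (intro sum_pos) auto
      have \<beta>p: "0 < \<beta>" unfolding \<beta>_def using t2p S2n S2ne finS2 by (intro sum_pos) auto
      have am: "\<alpha> \<le> m" and bm: "\<beta> \<le> m" using m_eq by auto
      define w where "w = (\<lambda>k::nat\<times>nat. t1 (fst k) * t2 (snd k) / (\<alpha> * \<beta>))"
      define g where "g = (\<lambda>k (z::nat\<Rightarrow>real). pairval (r (fst k)) (r (snd k)) (z (fst k)) (z (snd k)))"
      have ij: "\<And>i j. i \<in> S \<Longrightarrow> j \<in> S2 \<Longrightarrow> i \<noteq> j" unfolding S2_def by auto
      show ?thesis
      proof (rule conv_bound[OF PS, of "S \<times> S2" w m g c f])
        show "finite (S \<times> S2)" using finS finS2 by simp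
        show "\<And>k. k \<in> S \<times> S2 \<Longrightarrow> 0 \<le> w k" unfolding w_def using t1p t2p Sn S2n \<alpha>p \<beta>p
          by (auto intro!: divide_nonneg_pos mult_nonneg_nonneg simp: less_imp_le)
        show "sum w (S \<times> S2) = 1"
        proof -
          have "sum w (S \<times> S2) = (\<Sum>i\<in>S. \<Sum>j\<in>S2. t1 i * t2 j / (\<alpha> * \<beta>) * (\<alpha> * (1/\<alpha>)))"
            unfolding w_def using sum_prod2[of "\<lambda>i j. t1 i * t2 j / (\<alpha> * \<beta>)" S S2] \<alpha>p by simp
          also have "\<dots> = (\<Sum>i\<in>S. t1 i * (1/\<alpha>))"
            by (rule dsum1) (use \<alpha>p \<beta>p \<beta>_def in auto)
          also have "\<dots> = 1" using \<alpha>p unfolding \<alpha>_def by (simp add: sum_divide_distrib[symmetric])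
          finally show ?thesis .
        qed
        show "0 \<le> m" by (rule m0)
        show "\<And>k. k \<in> S \<times> S2 \<Longrightarrow> integrable P (g k)"
          unfolding g_def using pair_int(1)[OF Cn] Sn S2n ij rp by auto
        show "\<And>k. k \<in> S \<times> S2 \<Longrightarrow> integral\<^sup>L P (g k) \<le> c"
          unfolding g_def using pair_int(2)[OF Cn] Sn S2n ij rp phic by auto
        show "integrable P f" by (rule fint)
        fix z assume "z \<in> space P"
        define W where "W = (\<lambda>i j. t1 i * t2 j / (\<alpha> * \<beta>))"
        define G where "G = (\<lambda>i j. m * pairval (r i) (r j) (z i) (z j))"
        have Wn: "\<And>i j. i \<in> S \<Longrightarrow> j \<in> S2 \<Longrightarrow> 0 \<le> W i j" unfolding W_def using t1p t2p Sn S2n \<alpha>p \<beta>p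
          by (auto intro!: divide_nonneg_pos mult_nonneg_nonneg simp: less_imp_le)
        have rhs: "(\<Sum>k\<in>S \<times> S2. w k * (m * g k z)) = (\<Sum>i\<in>S. \<Sum>j\<in>S2. W i j * G i j)"
          unfolding w_def g_def W_def G_def using sum_prod2[of "\<lambda>i j. t1 i * t2 j / (\<alpha> * \<beta>) * (m * pairval (r i) (r j) (z i) (z j))" S S2]
          by simp
        have A1: "(\<Sum>i\<in>S. t1 i * I i z) = (\<Sum>i\<in>S. \<Sum>j\<in>S2. W i j * (\<alpha> * I i z))"
          unfolding W_def by (rule dsum1[symmetric]) (use \<alpha>p \<beta>p \<beta>_def in auto)
        have A2: "(\<Sum>j\<in>S2. t1 j * I j z) = (\<Sum>i\<in>S. \<Sum>j\<in>S2. W i j * (\<beta> * (r j * I j z)))"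
        proof -
          have "(\<Sum>i\<in>S. \<Sum>j\<in>S2. W i j * (\<beta> * (r j * I j z))) = (\<Sum>j\<in>S2. t2 j * (r j * I j z))"
            unfolding W_def by (rule dsum2) (use \<alpha>p \<beta>p \<alpha>_def in auto)
          also have "\<dots> = (\<Sum>j\<in>S2. t1 j * I j z)"
            by (rule sum.cong[OF refl]) (simp add: mult.assoc[symmetric] ar S2n)
          finally show ?thesis by simp
        qed
        have B1: "(\<Sum>i\<in>S. t2 i * (1 - I i z)) = (\<Sum>i\<in>S. \<Sum>j\<in>S2. W i j * (\<alpha> * ((1 / r i) * (1 - I i z))))"
        proof -
          have "(\<Sum>i\<in>S. \<Sum>j\<in>S2. W i j * (\<alpha> * ((1 / r i) * (1 - I i z)))) = (\<Sum>i\<in>S. t1 i * ((1 / r i) * (1 - I i z)))"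
            unfolding W_def by (rule dsum1) (use \<alpha>p \<beta>p \<beta>_def in auto)
          also have "\<dots> = (\<Sum>i\<in>S. t2 i * (1 - I i z))"
            by (rule sum.cong[OF refl]) (simp only: mult.assoc[symmetric] br[OF Sn])
          finally show ?thesis by simp
        qed
        have B2: "(\<Sum>j\<in>S2. t2 j * (1 - I j z)) = (\<Sum>i\<in>S. \<Sum>j\<in>S2. W i j * (\<beta> * (1 - I j z)))"
          unfolding W_def by (rule dsum2[symmetric]) (use \<alpha>p \<beta>p \<alpha>_def in auto)
        have "(\<Sum>k<n. t1 k * I k z) = (\<Sum>i\<in>S. \<Sum>j\<in>S2. W i j * (\<alpha> * I i z) + W i j * (\<beta> * (r j * I j z)))"
          unfolding split[of "\<lambda>k. t1 k * I k z"] A1 A2 by (simp add: sum.distrib)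
        also have "\<dots> \<le> (\<Sum>i\<in>S. \<Sum>j\<in>S2. W i j * G i j)"
        proof (intro sum_mono)
          fix i j assume i: "i \<in> S" and j: "j \<in> S2"
          have "\<alpha> * ind (r i) (z i) + \<beta> * r j * ind (r j) (z j) \<le> m * pairval (r i) (r j) (z i) (z j)"
            by (rule pv_bound(1)) (use \<alpha>0 \<beta>0 am bm rp Sn S2n i j in auto)
          then have "\<alpha> * I i z + \<beta> * (r j * I j z) \<le> G i j" unfolding G_def I_def by (simp add: mult.assoc)
          then have "W i j * (\<alpha> * I i z + \<beta> * (r j * I j z)) \<le> W i j * G i j"
            by (rule mult_left_mono) (rule Wn[OF i j])
          then show "W i j * (\<alpha> * I i z) + W i j * (\<beta> * (r j * I j z)) \<le> W i j * G i j"
            by (simp add: distrib_left)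
        qed
        finally have LA: "(\<Sum>k<n. t1 k * I k z) \<le> (\<Sum>i\<in>S. \<Sum>j\<in>S2. W i j * G i j)" .
        have "(\<Sum>k<n. t2 k * (1 - I k z)) = (\<Sum>i\<in>S. \<Sum>j\<in>S2. W i j * (\<alpha> * ((1 / r i) * (1 - I i z))) + W i j * (\<beta> * (1 - I j z)))"
          unfolding split[of "\<lambda>k. t2 k * (1 - I k z)"] B1 B2 by (simp add: sum.distrib)
        also have "\<dots> \<le> (\<Sum>i\<in>S. \<Sum>j\<in>S2. W i j * G i j)"
        proof (intro sum_mono)
          fix i j assume i: "i \<in> S" and j: "j \<in> S2"
          have "\<alpha> * (1 / r i) * (1 - ind (r i) (z i)) + \<beta> * (1 - ind (r j) (z j)) \<le> m * pairval (r i) (r j) (z i) (z j)"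
            by (rule pv_bound(2)) (use \<alpha>0 \<beta>0 am bm rp Sn S2n i j in auto)
          then have "\<alpha> * ((1 / r i) * (1 - I i z)) + \<beta> * (1 - I j z) \<le> G i j" unfolding G_def I_def by (simp add: mult.assoc)
          then have "W i j * (\<alpha> * ((1 / r i) * (1 - I i z)) + \<beta> * (1 - I j z)) \<le> W i j * G i j"
            by (rule mult_left_mono) (rule Wn[OF i j])
          then show "W i j * (\<alpha> * ((1 / r i) * (1 - I i z))) + W i j * (\<beta> * (1 - I j z)) \<le> W i j * G i j"
            by (simp add: distrib_left)
        qed
        finally have LB: "(\<Sum>k<n. t2 k * (1 - I k z)) \<le> (\<Sum>i\<in>S. \<Sum>j\<in>S2. W i j * G i j)" .
        show "f z \<le> (\<Sum>k\<in>S \<times> S2. w k * (m * g k z))" unfolding rhs feq using LA LB by simp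
      qed
    qed
  qed
  then show ?thesis unfolding exp_makespan_def f_def m_def by (simp add: mult.commute)
qed


definition lt1 :: "real \<Rightarrow> real \<Rightarrow> nat \<Rightarrow> real" where
  "lt1 y \<delta> k = (if k = 0 then 1 else if k = 1 then y else \<delta>)"
definition lt2 :: "real \<Rightarrow> real \<Rightarrow> nat \<Rightarrow> real" where
  "lt2 x \<delta> k = (if k = 0 then 1/x else if k = 1 then 1 else \<delta>)"

lemma lower_pos:
  assumes "0 < x" "0 < y" "0 < \<delta>"
  shows "pos_matrix n (lt1 y \<delta>) (lt2 x \<delta>)"
  using assms by (auto simp: pos_matrix_def lt1_def lt2_def)

lemma phi_nonneg:
  assumes "Cn n P" "2 \<le> n" "0 < x" "0 < y"
  shows "0 \<le> phi P x y"
proof -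
  have "phi P x y = integral\<^sup>L P (\<lambda>z. pairval x y (z 0) (z 1))"
    using pair_int(2)[OF assms(1), of 0 1 x y] assms by simp
  also have "0 \<le> \<dots>"
    by (rule Bochner_Integration.integral_nonneg) (use pairval_nonneg assms in auto)
  finally show ?thesis by simp
qed

lemma lower_E:
  assumes Cn: "Cn n P" and n2: "2 \<le> n" and xyd: "0 < x" "0 < y" "0 < \<delta>"
  shows "phi P x y \<le> exp_makespan n P (lt1 y \<delta>) (lt2 x \<delta>)"
proof -
  let ?t1 = "lt1 y \<delta>" and ?t2 = "lt2 x \<delta>"
  have "phi P x y = integral\<^sup>L P (\<lambda>z. pairval x y (z 0) (z 1))"
    using pair_int(2)[OF Cn, of 0 1 x y] n2 xyd by simp
  also have "\<dots> \<le> integral\<^sup>L P (\<lambda>z. makespan n ?t1 ?t2 (alloc n ?t1 ?t2 z))"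
  proof (rule Bochner_Integration.integral_mono)
    show "integrable P (\<lambda>z. pairval x y (z 0) (z 1))"
      using pair_int(1)[OF Cn, of 0 1 x y] n2 xyd by simp
    show "integrable P (\<lambda>z. makespan n ?t1 ?t2 (alloc n ?t1 ?t2 z))" by (rule ms_int[OF Cn])
    fix z
    define I where "I = (\<lambda>k. ind (?t1 k / ?t2 k) (z k))"
    have I0: "I 0 = ind x (z 0)" unfolding I_def using xyd by (simp add: lt1_def lt2_def)
    have I1: "I 1 = ind y (z 1)" unfolding I_def by (simp add: lt1_def lt2_def)
    have Ib: "\<And>k. 0 \<le> I k \<and> I k \<le> 1" unfolding I_def ind_def by auto
    have nn1: "\<And>k. 0 \<le> ?t1 k * I k" using Ib xyd by (auto simp: lt1_def)
    have nn2: "\<And>k. 0 \<le> ?t2 k * (1 - I k)" using Ib xyd by (auto simp: lt2_def)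
    have sub: "{0, 1} \<subseteq> {..<n}" using n2 by auto
    have A: "(\<Sum>k\<in>{0,1}. ?t1 k * I k) \<le> (\<Sum>k<n. ?t1 k * I k)"
      by (rule sum_mono2[OF _ sub]) (use nn1 in auto)
    have B: "(\<Sum>k\<in>{0,1}. ?t2 k * (1 - I k)) \<le> (\<Sum>k<n. ?t2 k * (1 - I k))"
      by (rule sum_mono2[OF _ sub]) (use nn2 in auto)
    have A': "(\<Sum>k\<in>{0,1}. ?t1 k * I k) = ind x (z 0) + y * ind y (z 1)"
      using I0 I1 by (simp add: lt1_def)
    have B': "(\<Sum>k\<in>{0,1}. ?t2 k * (1 - I k)) = (1/x) * (1 - ind x (z 0)) + (1 - ind y (z 1))"
      using I0 I1 by (simp add: lt2_def)
    show "pairval x y (z 0) (z 1) \<le> makespan n ?t1 ?t2 (alloc n ?t1 ?t2 z)"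
    proof -
      have "pairval x y (z 0) (z 1) \<le> max (\<Sum>k<n. ?t1 k * I k) (\<Sum>k<n. ?t2 k * (1 - I k))"
        unfolding pairval_def by (intro max.mono) (use A B A' B' in linarith)+
      then show ?thesis unfolding ms_alloc I_def .
    qed
  qed
  finally show ?thesis unfolding exp_makespan_def .
qed

lemma lower_opt:
  assumes n2: "2 \<le> n" and d: "0 < \<delta>"
  shows "opt_makespan n (lt1 y \<delta>) (lt2 x \<delta>) \<le> 1 + real n * \<delta>"
proof -
  define S where "S = {..<n} - {1}"
  have Ss: "S \<subseteq> {..<n}" unfolding S_def by auto
  have c: "{..<n} - S = {1}" unfolding S_def using n2 by auto
  have S0: "0 \<in> S" unfolding S_def using n2 by auto
  have finS: "finite S" unfolding S_def by simp
  have "(\<Sum>j\<in>S. lt1 y \<delta> j) = lt1 y \<delta> 0 + (\<Sum>j\<in>S - {0}. lt1 y \<delta> j)"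
    by (rule sum.remove[OF finS S0])
  also have "(\<Sum>j\<in>S - {0}. lt1 y \<delta> j) = (\<Sum>j\<in>S - {0}. \<delta>)"
    by (rule sum.cong[OF refl]) (auto simp: lt1_def S_def)
  also have "\<dots> = real (card (S - {0})) * \<delta>" by simp
  also have "\<dots> \<le> real n * \<delta>"
  proof (rule mult_right_mono)
    have "card (S - {0}) \<le> card {..<n}" by (rule card_mono) (use Ss in auto)
    then show "real (card (S - {0})) \<le> real n" by simp
  qed (use d in simp)
  finally have s1: "(\<Sum>j\<in>S. lt1 y \<delta> j) \<le> 1 + real n * \<delta>" by (simp add: lt1_def)
  have s2: "(\<Sum>j\<in>{..<n} - S. lt2 x \<delta> j) = 1" unfolding c by (simp add: lt2_def)
  have "opt_makespan n (lt1 y \<delta>) (lt2 x \<delta>) \<le> makespan n (lt1 y \<delta>) (lt2 x \<delta>) S"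
    by (rule opt_le[OF Ss])
  also have "\<dots> \<le> 1 + real n * \<delta>" unfolding makespan_def s2 using s1 d by simp
  finally show ?thesis .
qed

theorem theorem5:
  fixes n :: nat and P :: "(nat \<Rightarrow> real) measure"
  assumes "n \<ge> 2" and "Cn n P"
  shows "approx_ratio n P = (SUP xy\<in>{xy::real\<times>real. 0 < fst xy \<and> 0 < snd xy}.
             ereal (phi P (fst xy) (snd xy)))"
proof -
  note n2 = assms(1) and Cn = assms(2)
  define \<Phi> where "\<Phi> = (SUP xy\<in>{xy::real\<times>real. 0 < fst xy \<and> 0 < snd xy}. ereal (phi P (fst xy) (snd xy)))"
  have n1: "1 \<le> n" using n2 by simp
  have phiup: "ereal (phi P x y) \<le> \<Phi>" if "0 < x" "0 < y" for x y
    unfolding \<Phi>_def by (rule SUP_upper2[of "(x, y)"]) (use that in auto)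
  have "approx_ratio n P \<le> \<Phi>"
    unfolding approx_ratio_def
  proof (rule SUP_least)
    fix t assume t: "t \<in> {(t1, t2). pos_matrix n t1 t2}"
    obtain t1 t2 where tt: "t = (t1, t2)" and pm: "pos_matrix n t1 t2" using t by auto
    have op: "0 < opt_makespan n t1 t2" by (rule opt_pos[OF n1 pm])
    show "ereal (exp_makespan n P (fst t) (snd t) / opt_makespan n (fst t) (snd t)) \<le> \<Phi>"
    proof (cases \<Phi>)
      case (real c)
      have phic: "\<And>x y. 0 < x \<Longrightarrow> 0 < y \<Longrightarrow> phi P x y \<le> c"
        using phiup real by fastforce
      have "exp_makespan n P t1 t2 \<le> c * opt_makespan n t1 t2" by (rule upper[OF Cn n2 pm phic])
      then have "exp_makespan n P t1 t2 / opt_makespan n t1 t2 \<le> c" using op by (simp add: pos_divide_le_eq)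
      then show ?thesis using tt real by simp
    next
      case PInf then show ?thesis by simp
    next
      case MInf
      then have False using phiup[of 1 1] by simp
      then show ?thesis ..
    qed
  qed
  moreover have "\<Phi> \<le> approx_ratio n P"
    unfolding \<Phi>_def
  proof (rule SUP_least)
    fix xy :: "real \<times> real" assume "xy \<in> {xy. 0 < fst xy \<and> 0 < snd xy}"
    then obtain x y where xy: "xy = (x, y)" "0 < x" "0 < y" by (cases xy) auto
    define ph where "ph = phi P x y"
    have ph0: "0 \<le> ph" unfolding ph_def by (rule phi_nonneg[OF Cn n2 xy(2,3)])
    have key: "ereal (ph / (1 + real n * \<delta>)) \<le> approx_ratio n P" if d: "0 < \<delta>" for \<delta>
    proof -
      let ?t1 = "lt1 y \<delta>" and ?t2 = "lt2 x \<delta>"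
      have pm: "pos_matrix n ?t1 ?t2" by (rule lower_pos[OF xy(2,3) d])
      have op: "0 < opt_makespan n ?t1 ?t2" by (rule opt_pos[OF n1 pm])
      have E: "ph \<le> exp_makespan n P ?t1 ?t2" unfolding ph_def by (rule lower_E[OF Cn n2 xy(2,3) d])
      have O: "opt_makespan n ?t1 ?t2 \<le> 1 + real n * \<delta>" by (rule lower_opt[OF n2 d])
      have "ph / (1 + real n * \<delta>) \<le> ph / opt_makespan n ?t1 ?t2"
      proof (rule divide_left_mono[OF O ph0])
        have p1: "0 < 1 + real n * \<delta>" using d by (simp add: add_pos_nonneg)
        show "0 < (1 + real n * \<delta>) * opt_makespan n ?t1 ?t2" using mult_pos_pos[OF p1 op] .
      qed
      also have "\<dots> \<le> exp_makespan n P ?t1 ?t2 / opt_makespan n ?t1 ?t2"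
        by (rule divide_right_mono[OF E]) (use op in simp)
      finally have "ereal (ph / (1 + real n * \<delta>)) \<le> ereal (exp_makespan n P ?t1 ?t2 / opt_makespan n ?t1 ?t2)"
        by simp
      also have "\<dots> \<le> approx_ratio n P"
        unfolding approx_ratio_def by (rule SUP_upper2[of "(?t1, ?t2)"]) (use pm in auto)
      finally show ?thesis .
    qed
    show "ereal (phi P (fst xy) (snd xy)) \<le> approx_ratio n P"
    proof (cases "approx_ratio n P")
      case (real r)
      have r0: "0 \<le> r"
      proof -
        have "ph / (1 + real n * 1) \<le> r" using key[of 1] real by simp
        moreover have "0 \<le> ph / (1 + real n * 1)" using ph0 by simp
        ultimately show ?thesis by linarith
      qed
      have "ph \<le> r"
      proof (rule field_le_epsilon)
        fix e :: real assume e: "0 < e"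
        define \<delta> where "\<delta> = e / (r * real n + 1)"
        have rn: "0 < r * real n + 1"
        proof -
          have "0 \<le> r * real n" using r0 by simp
          then show ?thesis by linarith
        qed
        have dp: "0 < \<delta>" unfolding \<delta>_def using e rn by (rule divide_pos_pos)
        have pos: "0 < 1 + real n * \<delta>" using dp by (simp add: add_pos_nonneg)
        have "ph / (1 + real n * \<delta>) \<le> r" using key[OF dp] real by simp
        then have h: "ph \<le> r * (1 + real n * \<delta>)" using pos by (simp add: pos_divide_le_eq)
        have "r * (real n * \<delta>) = (r * real n) * e / (r * real n + 1)"
          unfolding \<delta>_def by simp
        also have "\<dots> \<le> e" using rn e by (simp add: pos_divide_le_eq algebra_simps)
        finally have "r * (real n * \<delta>) \<le> e" .
        then show "ph \<le> r + e" using h by (simp add: algebra_simps)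
      qed
      then show ?thesis using xy real by (simp add: ph_def)
    next
      case PInf then show ?thesis by simp
    next
      case MInf
      then have False using key[of 1] by simp
      then show ?thesis ..
    qed
  qed
  ultimately show ?thesis unfolding \<Phi>_def by (rule antisym)
qed

end
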